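(* Consider a credit-attribution game with authors $N=\{1,\dots,n\}$, let $x\in N$, let $p^*\in(0,1]^n$ be baseline reliabilities and let $R\subseteq N\setminus\{x\}$. Let $p$ be obtained from $p^*$ by setting $p_j=0$ for $j\in R$ and $p_j=p^*_j$ otherwise. Then $Sh[\overline{v_{FC}}](x)$ computed with parameters $p$ is at least $Sh[\overline{v_{FC}}](x)$ computed with parameters $p^*$; i.e., no removal attack decreases the Shapley value of $x$ in the full credit game.
   Context: A credit-attribution game has authors $N$ and papers $P_1,\dots,P_m$, each paper $P_k$ with author set $Auth_k\subseteq N$ and weight $w_k\in\mathbb{R}_+$. The full credit game has value $v_{FC}(S)=\sum\{w_k: Auth_k\cap S\ne\emptyset\}$. For $T\subseteq S$, $\Pi_{T,S}=\prod_{i\in T}p_i\prod_{i\in S\setminus T}(1-p_i)$; reliability extension $\overline v(S)=\sum_{T\subseteq S}v(T)\Pi_{T,S}$. Shapley value $Sh[v](x)=\frac1{n!}\sum_\pi[v(S^x_\pi\cup\{x\})-v(S^x_\pi)]$ over permutations $\pi$ of $N$, $S^x_\pi$ the players preceding $x$. *)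

theory Defs
  imports "HOL-Analysis.Analysis" "HOL-Combinatorics.Multiset_Permutations"
begin

text \<open>Credit-attribution game: papers indexed by k < m, author sets Auth k,
  weights w k. Full-credit game value.\<close>
definition v_FC :: "nat \<Rightarrow> (nat \<Rightarrow> 'a set) \<Rightarrow> (nat \<Rightarrow> real) \<Rightarrow> 'a set \<Rightarrow> real" where
  "v_FC m Auth w S = (\<Sum>k\<in>{k. k < m \<and> Auth k \<inter> S \<noteq> {}}. w k)"

definition Pi_TS :: "('a \<Rightarrow> real) \<Rightarrow> 'a set \<Rightarrow> 'a set \<Rightarrow> real" where
  "Pi_TS p T S = (\<Prod>i\<in>T. p i) * (\<Prod>i\<in>S - T. 1 - p i)"

definition reliability_ext :: "('a \<Rightarrow> real) \<Rightarrow> ('a set \<Rightarrow> real) \<Rightarrow> 'a set \<Rightarrow> real" where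
  "reliability_ext p v S = (\<Sum>T\<in>Pow S. v T * Pi_TS p T S)"

definition shapley :: "'a set \<Rightarrow> ('a set \<Rightarrow> real) \<Rightarrow> 'a \<Rightarrow> real" where
  "shapley N v x = (1 / fact (card N)) *
     (\<Sum>l\<in>permutations_of_set N.
        v (set (takeWhile (\<lambda>y. y \<noteq> x) l) \<union> {x}) - v (set (takeWhile (\<lambda>y. y \<noteq> x) l)))"

end

theory Submission
  imports Defs
begin

definition qq :: "(nat \<Rightarrow> real) \<Rightarrow> nat set \<Rightarrow> nat set \<Rightarrow> real" where
  "qq p A S = (\<Prod>i\<in>S. if i \<in> A then 1 - p i else 1)"

lemma sum_Pi_one:
  assumes "finite S"
  shows "(\<Sum>T\<in>Pow S. Pi_TS p T S) = 1"
proof -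
  have "(\<Prod>i\<in>S. p i + (1 - p i)) = (\<Sum>T\<in>Pow S. Pi_TS p T S)"
    unfolding Pi_TS_def by (rule prod_add[OF assms])
  then show ?thesis by simp
qed

lemma sum_Pi_disj:
  assumes "finite S"
  shows "(\<Sum>T\<in>Pow S. (if A \<inter> T = {} then 1 else 0) * Pi_TS p T S) = qq p A S"
proof -
  define f where "f i = (if i \<in> A then 0 else p i)" for i
  have "qq p A S = (\<Prod>i\<in>S. f i + (1 - p i))"
    unfolding qq_def f_def by (rule prod.cong) auto
  also have "\<dots> = (\<Sum>T\<in>Pow S. prod f T * (\<Prod>i\<in>S - T. 1 - p i))"
    by (rule prod_add[OF assms])
  also have "\<dots> = (\<Sum>T\<in>Pow S. (if A \<inter> T = {} then 1 else 0) * Pi_TS p T S)"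
  proof (rule sum.cong)
    fix T assume T: "T \<in> Pow S"
    then have fT: "finite T" using assms finite_subset by auto
    show "prod f T * (\<Prod>i\<in>S - T. 1 - p i) = (if A \<inter> T = {} then 1 else 0) * Pi_TS p T S"
    proof (cases "A \<inter> T = {}")
      case True
      then have "prod f T = prod p T" unfolding f_def by (intro prod.cong) auto
      then show ?thesis using True by (simp add: Pi_TS_def)
    next
      case False
      then obtain i where "i \<in> A" "i \<in> T" by auto
      then have "prod f T = 0" using fT by (auto simp: f_def prod_zero_iff)
      then show ?thesis using False by simp
    qed
  qed simp
  finally show ?thesis by simp
qed

lemma v_ind: "v_FC m Auth w T = (\<Sum>k<m. w k * (1 - (if Auth k \<inter> T = {} then 1 else 0)))"
proof -
  have "v_FC m Auth w T = (\<Sum>k\<in>{..<m} \<inter> {k. Auth k \<inter> T \<noteq> {}}. w k)"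
    unfolding v_FC_def by (rule sum.cong) auto
  also have "\<dots> = (\<Sum>k<m. if Auth k \<inter> T \<noteq> {} then w k else 0)"
    by (simp add: sum.inter_restrict)
  also have "\<dots> = (\<Sum>k<m. w k * (1 - (if Auth k \<inter> T = {} then 1 else 0)))"
    by (rule sum.cong) auto
  finally show ?thesis .
qed

lemma rel_closed:
  assumes "finite S"
  shows "reliability_ext p (v_FC m Auth w) S = (\<Sum>k<m. w k * (1 - qq p (Auth k) S))"
proof -
  let ?I = "\<lambda>k T. (if Auth k \<inter> T = {} then 1 else 0) :: real"
  have "reliability_ext p (v_FC m Auth w) S =
     (\<Sum>T\<in>Pow S. \<Sum>k<m. w k * ((1 - ?I k T) * Pi_TS p T S))"
    unfolding reliability_ext_def v_ind sum_distrib_right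
    by (intro sum.cong refl) (simp only: mult.assoc)
  also have "\<dots> = (\<Sum>k<m. \<Sum>T\<in>Pow S. w k * ((1 - ?I k T) * Pi_TS p T S))"
    by (rule sum.swap)
  also have "\<dots> = (\<Sum>k<m. w k * (\<Sum>T\<in>Pow S. (1 - ?I k T) * Pi_TS p T S))"
    by (simp only: sum_distrib_left)
  also have "\<dots> = (\<Sum>k<m. w k * (1 - qq p (Auth k) S))"
  proof (rule sum.cong)
    fix k
    have "(\<Sum>T\<in>Pow S. (1 - ?I k T) * Pi_TS p T S)
       = (\<Sum>T\<in>Pow S. Pi_TS p T S - ?I k T * Pi_TS p T S)"
      by (rule sum.cong) (simp_all add: left_diff_distrib)
    also have "\<dots> = (\<Sum>T\<in>Pow S. Pi_TS p T S) - (\<Sum>T\<in>Pow S. ?I k T * Pi_TS p T S)"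
      by (rule sum_subtractf)
    also have "\<dots> = 1 - qq p (Auth k) S"
      using sum_Pi_one[OF assms] sum_Pi_disj[OF assms] by simp
    finally show "w k * (\<Sum>T\<in>Pow S. (1 - ?I k T) * Pi_TS p T S) = w k * (1 - qq p (Auth k) S)"
      by simp
  qed simp
  finally show ?thesis .
qed

lemma marginal:
  assumes "finite S" "x \<notin> S"
  shows "reliability_ext p (v_FC m Auth w) (S \<union> {x}) - reliability_ext p (v_FC m Auth w) S
     = (\<Sum>k<m. w k * qq p (Auth k) S * (if x \<in> Auth k then p x else 0))"
proof -
  have "qq p A (S \<union> {x}) = qq p A S * (if x \<in> A then 1 - p x else 1)" for A
    using assms unfolding qq_def by (simp add: mult.commute)
  then have "w k * (1 - qq p (Auth k) (S \<union> {x})) - w k * (1 - qq p (Auth k) S)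
      = w k * qq p (Auth k) S * (if x \<in> Auth k then p x else 0)" for k
    by (simp add: algebra_simps)
  then show ?thesis
    unfolding rel_closed[OF assms(1)] rel_closed[OF finite_Un[THEN iffD2, OF conjI[OF assms(1) finite.insertI[OF finite.emptyI]]]]
    by (simp only: sum_subtractf[symmetric])
qed

theorem theorem6:
  fixes n m :: nat and Auth :: "nat \<Rightarrow> nat set" and w :: "nat \<Rightarrow> real"
    and pstar :: "nat \<Rightarrow> real" and x :: nat and R :: "nat set"
  assumes Auth_sub: "\<forall>k<m. Auth k \<subseteq> {1..n}"
    and w_nonneg: "\<forall>k<m. w k \<ge> 0"
    and x_in: "x \<in> {1..n}"
    and pstar_range: "\<forall>i\<in>{1..n}. 0 < pstar i \<and> pstar i \<le> 1"
    and R_sub: "R \<subseteq> {1..n} - {x}"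
  shows "shapley {1..n} (reliability_ext (\<lambda>j. if j \<in> R then 0 else pstar j) (v_FC m Auth w)) x
         \<ge> shapley {1..n} (reliability_ext pstar (v_FC m Auth w)) x"
proof -
  define p where "p = (\<lambda>j. if j \<in> R then 0 else pstar j)"
  have px: "p x = pstar x" using R_sub by (auto simp: p_def)
  have key: "reliability_ext pstar (v_FC m Auth w) (S \<union> {x}) - reliability_ext pstar (v_FC m Auth w) S
     \<le> reliability_ext p (v_FC m Auth w) (S \<union> {x}) - reliability_ext p (v_FC m Auth w) S"
    if S: "S \<subseteq> {1..n}" "x \<notin> S" for S
  proof -
    have fS: "finite S" using S finite_subset by blast
    show ?thesis unfolding marginal[OF fS S(2)] px
    proof (rule sum_mono)
      fix k assume "k \<in> {..<m}"
      then have wk: "w k \<ge> 0" using w_nonneg by auto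
      have "qq pstar (Auth k) S \<le> qq p (Auth k) S"
        unfolding qq_def
        by (rule prod_mono) (use S pstar_range in \<open>fastforce simp: p_def\<close>)
      moreover have "(if x \<in> Auth k then pstar x else 0) \<ge> 0" using pstar_range x_in by (simp add: less_imp_le)
      ultimately show "w k * qq pstar (Auth k) S * (if x \<in> Auth k then pstar x else 0)
          \<le> w k * qq p (Auth k) S * (if x \<in> Auth k then pstar x else 0)"
        using wk by (intro mult_right_mono mult_left_mono) auto
    qed
  qed
  show ?thesis
    unfolding shapley_def p_def[symmetric]
  proof (rule mult_left_mono)
    show "0 \<le> (1 / fact (card {1..n}) :: real)" by simp
    show "(\<Sum>l\<in>permutations_of_set {1..n}.
        reliability_ext pstar (v_FC m Auth w) (set (takeWhile (\<lambda>y. y \<noteq> x) l) \<union> {x}) -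
        reliability_ext pstar (v_FC m Auth w) (set (takeWhile (\<lambda>y. y \<noteq> x) l)))
      \<le> (\<Sum>l\<in>permutations_of_set {1..n}.
        reliability_ext p (v_FC m Auth w) (set (takeWhile (\<lambda>y. y \<noteq> x) l) \<union> {x}) -
        reliability_ext p (v_FC m Auth w) (set (takeWhile (\<lambda>y. y \<noteq> x) l)))"
    proof (rule sum_mono)
      fix l assume "l \<in> permutations_of_set {1..n}"
      then have "set l = {1..n}" by (simp add: permutations_of_set_def)
      show "reliability_ext pstar (v_FC m Auth w) (set (takeWhile (\<lambda>y. y \<noteq> x) l) \<union> {x}) -
        reliability_ext pstar (v_FC m Auth w) (set (takeWhile (\<lambda>y. y \<noteq> x) l))
       \<le> reliability_ext p (v_FC m Auth w) (set (takeWhile (\<lambda>y. y \<noteq> x) l) \<union> {x}) -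
        reliability_ext p (v_FC m Auth w) (set (takeWhile (\<lambda>y. y \<noteq> x) l))"
        by (rule key) (use \<open>set l = {1..n}\<close> in \<open>auto dest: set_takeWhileD\<close>)
    qed
  qed
qed

end
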